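(* Let $(x_n)_{n\ge1}$ be a sequence of integers. Then the set $$A=\Big\{\alpha\in\mathbb{R} : \delta_{\min}^{\alpha}(N)<\frac{1}{N^{2-o(1)}}\Big\}$$ either has Lebesgue measure zero or has full Lebesgue measure (its complement has measure zero).
   Context: For $x\in\mathbb{R}$, $\|x\|=\min_{k\in\mathbb{Z}}|x-k|$. For $\alpha\in\mathbb{R}$, $\delta_{\min}^{\alpha}(N)=\min\{\|\alpha x_m-\alpha x_n\| : 1\le m,n\le N,\ m\ne n\}$. The condition $\delta_{\min}^{\alpha}(N)<\frac{1}{N^{2-o(1)}}$ means there is a function $f_\alpha(N)\to0$ as $N\to\infty$ such that $\delta_{\min}^{\alpha}(N)<N^{-(2-f_\alpha(N))}$ for all sufficiently large $N$. *)

theory Defs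
  imports "HOL-Analysis.Analysis"
begin

definition dist_to_int :: "real \<Rightarrow> real" where
  "dist_to_int x = (INF k::int. \<bar>x - real_of_int k\<bar>)"

definition delta_min :: "(nat \<Rightarrow> int) \<Rightarrow> real \<Rightarrow> nat \<Rightarrow> real" where
  "delta_min x \<alpha> N =
     Min {dist_to_int (\<alpha> * real_of_int (x m) - \<alpha> * real_of_int (x n)) | m n.
            1 \<le> m \<and> m \<le> N \<and> 1 \<le> n \<and> n \<le> N \<and> m \<noteq> n}"

definition small_gap :: "(nat \<Rightarrow> int) \<Rightarrow> real \<Rightarrow> bool" where
  "small_gap x \<alpha> \<longleftrightarrow>
     (\<exists>f :: nat \<Rightarrow> real. f \<longlonglongrightarrow> 0 \<and>
        (\<forall>\<^sub>F N in sequentially. delta_min x \<alpha> N < real N powr (- (2 - f N))))"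

end

theory Submission
  imports Defs "HOL-Analysis.Analysis"
begin


lemma dti_bdd: "bdd_below (range (\<lambda>k::int. \<bar>y - real_of_int k\<bar>))"
  by (rule bdd_belowI[of _ 0]) auto

lemma dti_le: "dist_to_int y \<le> \<bar>y - real_of_int k\<bar>"
  unfolding dist_to_int_def by (rule cINF_lower[OF dti_bdd]) simp

lemma dti_nonneg: "0 \<le> dist_to_int y"
  unfolding dist_to_int_def by (rule cINF_greatest) auto

lemma dti_less_iff: "dist_to_int y < c \<longleftrightarrow> (\<exists>k::int. \<bar>y - real_of_int k\<bar> < c)"
  unfolding dist_to_int_def by (subst cINF_less_iff[OF _ dti_bdd]) auto

lemma dti_shift: "dist_to_int (y + real_of_int j) = dist_to_int y"
proof (rule antisym)
  show "dist_to_int (y + real_of_int j) \<le> dist_to_int y"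
    unfolding dist_to_int_def[of y]
  proof (rule cINF_greatest)
    fix k :: int
    have "dist_to_int (y + real_of_int j) \<le> \<bar>y + real_of_int j - real_of_int (k + j)\<bar>" by (rule dti_le)
    then show "dist_to_int (y + real_of_int j) \<le> \<bar>y - real_of_int k\<bar>" by simp
  qed simp
  show "dist_to_int y \<le> dist_to_int (y + real_of_int j)"
    unfolding dist_to_int_def[of "y + real_of_int j"]
  proof (rule cINF_greatest)
    fix k :: int
    have "dist_to_int y \<le> \<bar>y - real_of_int (k - j)\<bar>" by (rule dti_le)
    then show "dist_to_int y \<le> \<bar>y + real_of_int j - real_of_int k\<bar>" by (simp add: algebra_simps)
  qed simp
qed

lemma dti_mult: assumes "q > 0" shows "dist_to_int (real q * y) \<le> real q * dist_to_int y"
proof -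
  have "dist_to_int (real q * y) / real q \<le> dist_to_int y"
    unfolding dist_to_int_def[of y]
  proof (rule cINF_greatest)
    fix k :: int
    have "dist_to_int (real q * y) \<le> \<bar>real q * y - real_of_int (int q * k)\<bar>" by (rule dti_le)
    also have "real q * y - real_of_int (int q * k) = real q * (y - real_of_int k)" by (simp add: algebra_simps)
    also have "\<bar>real q * (y - real_of_int k)\<bar> = real q * \<bar>y - real_of_int k\<bar>" by (simp add: abs_mult)
    finally show "dist_to_int (real q * y) / real q \<le> \<bar>y - real_of_int k\<bar>"
      using assms by (simp add: divide_simps mult.commute)
  qed simp
  then show ?thesis using assms by (simp add: divide_simps mult.commute)
qed



lemma dm_set_eq: "{dist_to_int (\<alpha> * real_of_int (x m) - \<alpha> * real_of_int (x n)) | m n.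
            1 \<le> m \<and> m \<le> N \<and> 1 \<le> n \<and> n \<le> N \<and> m \<noteq> n}
  = (\<lambda>(m,n). dist_to_int (\<alpha> * real_of_int (x m) - \<alpha> * real_of_int (x n))) ` {(m,n). 1 \<le> m \<and> m \<le> N \<and> 1 \<le> n \<and> n \<le> N \<and> m \<noteq> n}"
  by auto

lemma dm_idx_finite: "finite {(m,n). 1 \<le> m \<and> m \<le> N \<and> 1 \<le> n \<and> n \<le> (N::nat) \<and> m \<noteq> n}"
  by (rule finite_subset[of _ "{1..N} \<times> {1..N}"]) auto

lemma dm_idx_ne: "N \<ge> 2 \<Longrightarrow> {(m,n). 1 \<le> m \<and> m \<le> N \<and> 1 \<le> n \<and> n \<le> (N::nat) \<and> m \<noteq> n} \<noteq> {}"
  by (rule ex_in_conv[THEN iffD1], rule exI[of _ "(1,2)"]) auto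

lemma dm_less_iff:
  assumes "N \<ge> 2"
  shows "delta_min x \<alpha> N < c \<longleftrightarrow> (\<exists>m n. 1 \<le> m \<and> m \<le> N \<and> 1 \<le> n \<and> n \<le> N \<and> m \<noteq> n \<and>
            dist_to_int (\<alpha> * real_of_int (x m) - \<alpha> * real_of_int (x n)) < c)"
  unfolding delta_min_def dm_set_eq
  using dm_idx_finite[of N] dm_idx_ne[OF assms]
  by (subst Min_less_iff) auto

lemma dm_shift: "delta_min x (\<alpha> + real_of_int k) N = delta_min x \<alpha> N"
proof -
  have "dist_to_int ((\<alpha> + real_of_int k) * real_of_int (x m) - (\<alpha> + real_of_int k) * real_of_int (x n))
      = dist_to_int (\<alpha> * real_of_int (x m) - \<alpha> * real_of_int (x n))" for m n
  proof -
    have "(\<alpha> + real_of_int k) * real_of_int (x m) - (\<alpha> + real_of_int k) * real_of_int (x n)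
       = (\<alpha> * real_of_int (x m) - \<alpha> * real_of_int (x n)) + real_of_int (k * x m - k * x n)"
      by (simp add: algebra_simps)
    then show ?thesis by (simp only: dti_shift)
  qed
  then show ?thesis unfolding delta_min_def by simp
qed

lemma dm_mult:
  assumes "N \<ge> 2" "q > 0"
  shows "delta_min x (real q * \<alpha>) N \<le> real q * delta_min x \<alpha> N"
proof -
  let ?I = "{(m,n). 1 \<le> m \<and> m \<le> N \<and> 1 \<le> n \<and> n \<le> (N::nat) \<and> m \<noteq> n}"
  let ?g = "\<lambda>\<alpha>. (\<lambda>(m,n). dist_to_int (\<alpha> * real_of_int (x m) - \<alpha> * real_of_int (x n)))"
  have "Min (?g \<alpha> ` ?I) \<in> ?g \<alpha> ` ?I"
    using dm_idx_finite[of N] dm_idx_ne[OF assms(1)] by (intro Min_in) auto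
  then obtain m n where mn: "(m,n) \<in> ?I" and eq: "delta_min x \<alpha> N = ?g \<alpha> (m,n)"
    unfolding delta_min_def dm_set_eq by auto
  have "delta_min x (real q * \<alpha>) N \<le> ?g (real q * \<alpha>) (m,n)"
    unfolding delta_min_def dm_set_eq
    using dm_idx_finite[of N] mn by (intro Min_le) auto
  also have "\<dots> = dist_to_int (real q * (\<alpha> * real_of_int (x m) - \<alpha> * real_of_int (x n)))"
    by (simp add: algebra_simps)
  also have "\<dots> \<le> real q * ?g \<alpha> (m,n)"
    using dti_mult[OF assms(2)] by simp
  finally show ?thesis using eq by simp
qed



lemma ch1:
  assumes "small_gap x \<alpha>"
  shows "\<forall>\<^sub>F N in sequentially. delta_min x \<alpha> N < real N powr (- (2 - 1 / (real k + 1)))"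
proof -
  obtain f where f: "f \<longlonglongrightarrow> 0" and ev: "\<forall>\<^sub>F N in sequentially. delta_min x \<alpha> N < real N powr (- (2 - f N))"
    using assms unfolding small_gap_def by blast
  have "\<forall>\<^sub>F N in sequentially. f N < 1 / (real k + 1)"
    using order_tendstoD(2)[OF f] by simp
  moreover have "\<forall>\<^sub>F N in sequentially. N \<ge> 1" by (rule eventually_ge_at_top)
  ultimately show ?thesis using ev
  proof eventually_elim
    case (elim N)
    have "real N powr (- (2 - f N)) \<le> real N powr (- (2 - 1 / (real k + 1)))"
      using elim by (intro powr_mono) auto
    then show ?case using elim by linarith
  qed
qed

lemma ch2:
  assumes H: "\<And>k::nat. \<forall>\<^sub>F N in sequentially. delta_min x \<alpha> N < real N powr (- (2 - 1 / (real k + 1)))"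
  shows "small_gap x \<alpha>"
proof -
  define D where "D N = delta_min x \<alpha> N" for N
  define f where "f N = (if 0 < D N \<and> N \<ge> 2 then max 0 (2 + ln (D N) / ln (real N)) else 0) + 1 / (real N + 1)" for N
  have bound: "D N < real N powr (- (2 - f N))" if "N \<ge> 2" for N
  proof (cases "0 < D N")
    case False
    have "real N powr (- (2 - f N)) > 0" using that by simp
    then show ?thesis using False by linarith
  next
    case True
    have lnN: "ln (real N) > 0" using that by simp
    have "f N > 2 + ln (D N) / ln (real N)" unfolding f_def using True that
      by (simp add: max_def) (smt (verit) of_nat_0_le_iff divide_pos_pos)
    then have "ln (D N) / ln (real N) < f N - 2" by simp
    then have "ln (D N) < (f N - 2) * ln (real N)" using lnN by (simp add: divide_simps)
    then have "exp (ln (D N)) < exp ((f N - 2) * ln (real N))" by simp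
    then show ?thesis using True that by (simp add: powr_def)
  qed
  have f0: "f \<longlonglongrightarrow> 0"
  proof (rule order_tendstoI)
    fix a :: real assume "a < 0"
    then show "\<forall>\<^sub>F N in sequentially. a < f N"
    proof (intro always_eventually allI)
      fix N
      have "f N \<ge> 0" unfolding f_def by (intro add_nonneg_nonneg) auto
      then show "a < f N" using \<open>a < 0\<close> by linarith
    qed
  next
    fix a :: real assume a: "0 < a"
    obtain k :: nat where k: "1 / (real k + 1) < a / 2"
    proof -
      obtain k where "real k > 2 / a" using reals_Archimedean2 by blast
      then have "1 / (real k + 1) < a / 2" using a by (simp add: field_simps)
      then show ?thesis using that by blast
    qed
    obtain M :: nat where M: "real M > 2 / a" using reals_Archimedean2 by blast
    have "\<forall>\<^sub>F N in sequentially. N \<ge> max 2 M" by (rule eventually_ge_at_top)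
    then show "\<forall>\<^sub>F N in sequentially. f N < a" using H[of k]
    proof eventually_elim
      case (elim N)
      have N2: "N \<ge> 2" and NM: "N \<ge> M" using elim by auto
      have lnN: "ln (real N) > 0" using N2 by simp
      have inv: "1 / (real N + 1) < a / 2"
      proof -
        have "real N + 1 > 2 / a" using NM M by linarith
        then show ?thesis using a by (simp add: field_simps)
      qed
      have part: "(if 0 < D N \<and> N \<ge> 2 then max 0 (2 + ln (D N) / ln (real N)) else 0) < a / 2"
      proof (cases "0 < D N")
        case True
        have "ln (D N) < ln (real N powr (- (2 - 1 / (real k + 1))))"
          using elim True N2 unfolding D_def by (subst ln_less_cancel_iff) auto
        also have "\<dots> = - (2 - 1 / (real k + 1)) * ln (real N)" using N2 by (simp add: ln_powr)
        finally have "ln (D N) < - (2 - 1 / (real k + 1)) * ln (real N)" .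
        then have "ln (D N) / ln (real N) < - (2 - 1 / (real k + 1))" by (simp only: pos_divide_less_eq[OF lnN])
        then have "2 + ln (D N) / ln (real N) < a / 2" using k by linarith
        then show ?thesis using True N2 a by (simp only: if_True) (auto simp: max_def)
      qed (use a in simp)
      show ?case unfolding f_def using part inv by linarith
    qed
  qed
  have "\<forall>\<^sub>F N in sequentially. delta_min x \<alpha> N < real N powr (- (2 - f N))"
    using eventually_ge_at_top[of 2] by eventually_elim (use bound D_def in auto)
  then show ?thesis unfolding small_gap_def using f0 by blast
qed

lemma ch: "small_gap x \<alpha> \<longleftrightarrow> (\<forall>k::nat. \<forall>\<^sub>F N in sequentially. delta_min x \<alpha> N < real N powr (- (2 - 1 / (real k + 1))))"
  using ch1 ch2 by blast



lemma sg_shift: "small_gap x (\<alpha> + real_of_int k) \<longleftrightarrow> small_gap x \<alpha>"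
  unfolding small_gap_def dm_shift ..

lemma sg_mult:
  assumes sg: "small_gap x \<alpha>" and q: "q > 0"
  shows "small_gap x (real q * \<alpha>)"
  unfolding ch
proof
  fix k :: nat
  define e where "e = 1 / (real k + 1)"
  have e: "e > 0" unfolding e_def by simp
  have ek: "1 / (real (2 * k + 1) + 1) = e / 2" unfolding e_def by (simp add: field_simps)
  obtain M :: nat where M: "real M \<ge> real q powr (2 / e)" using real_arch_simple by blast
  have ev: "\<forall>\<^sub>F N in sequentially. delta_min x \<alpha> N < real N powr (- (2 - e / 2))"
    using ch1[OF sg, of "2 * k + 1"] unfolding ek .
  have "\<forall>\<^sub>F N in sequentially. N \<ge> max 2 M" by (rule eventually_ge_at_top)
  then show "\<forall>\<^sub>F N in sequentially. delta_min x (real q * \<alpha>) N < real N powr (- (2 - 1 / (real k + 1)))"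
    using ev
  proof eventually_elim
    case (elim N)
    have N2: "N \<ge> 2" and NM: "N \<ge> M" using elim(1) by auto
    have Npos: "real N > 0" using N2 by simp
    have "real q = (real q powr (2 / e)) powr (e / 2)"
      using q e by (simp add: powr_powr)
    also have "\<dots> \<le> real N powr (e / 2)"
      using M NM e by (intro powr_mono2) auto
    finally have qle: "real q \<le> real N powr (e / 2)" .
    have split: "real N powr (- (2 - e / 2)) = real N powr (- (2 - e)) / real N powr (e / 2)"
      using Npos by (simp add: powr_diff[symmetric] powr_minus_divide)
    have "delta_min x (real q * \<alpha>) N \<le> real q * delta_min x \<alpha> N" by (rule dm_mult[OF N2 q])
    also have "\<dots> < real q * real N powr (- (2 - e / 2))"
      using elim(2) q by simp
    also have "\<dots> = (real q / real N powr (e / 2)) * real N powr (- (2 - e))"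
      unfolding split by simp
    also have "\<dots> \<le> 1 * real N powr (- (2 - e))"
      using qle Npos by (intro mult_right_mono) (auto simp: divide_simps)
    finally show ?case unfolding e_def by simp
  qed
qed



definition Pk :: "(nat \<Rightarrow> int) \<Rightarrow> nat \<Rightarrow> nat \<Rightarrow> real \<Rightarrow> bool" where
  "Pk x k N \<alpha> \<longleftrightarrow> (\<exists>m n. 1 \<le> m \<and> m \<le> N \<and> 1 \<le> n \<and> n \<le> N \<and> m \<noteq> n \<and>
     (\<exists>j::int. \<bar>\<alpha> * real_of_int (x m) - \<alpha> * real_of_int (x n) - real_of_int j\<bar> < real N powr (- (2 - 1 / (real k + 1)))))"

lemma Pk_iff: "N \<ge> 2 \<Longrightarrow> Pk x k N \<alpha> \<longleftrightarrow> delta_min x \<alpha> N < real N powr (- (2 - 1 / (real k + 1)))"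
  unfolding Pk_def dm_less_iff dti_less_iff by simp

lemma sg_alt: "small_gap x \<alpha> \<longleftrightarrow> (\<forall>k::nat. \<exists>N0::nat. \<forall>N. N0 \<le> N \<longrightarrow> 2 \<le> N \<longrightarrow> Pk x k N \<alpha>)"
proof -
  have "(\<forall>\<^sub>F N in sequentially. delta_min x \<alpha> N < real N powr (- (2 - 1 / (real k + 1))))
     \<longleftrightarrow> (\<exists>N0::nat. \<forall>N. N0 \<le> N \<longrightarrow> 2 \<le> N \<longrightarrow> Pk x k N \<alpha>)" for k
  proof
    assume "\<forall>\<^sub>F N in sequentially. delta_min x \<alpha> N < real N powr (- (2 - 1 / (real k + 1)))"
    then obtain N0 where "\<forall>N\<ge>N0. delta_min x \<alpha> N < real N powr (- (2 - 1 / (real k + 1)))"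
      unfolding eventually_sequentially by blast
    then show "\<exists>N0::nat. \<forall>N. N0 \<le> N \<longrightarrow> 2 \<le> N \<longrightarrow> Pk x k N \<alpha>" using Pk_iff by blast
  next
    assume "\<exists>N0::nat. \<forall>N. N0 \<le> N \<longrightarrow> 2 \<le> N \<longrightarrow> Pk x k N \<alpha>"
    then obtain N0 where N0: "\<forall>N. N0 \<le> N \<longrightarrow> 2 \<le> N \<longrightarrow> Pk x k N \<alpha>" by blast
    show "\<forall>\<^sub>F N in sequentially. delta_min x \<alpha> N < real N powr (- (2 - 1 / (real k + 1)))"
      unfolding eventually_sequentially
      by (rule exI[of _ "max N0 2"]) (use N0 Pk_iff in auto)
  qed
  then show ?thesis unfolding ch by simp
qed

lemma A_borel: "{\<alpha>::real. small_gap x \<alpha>} \<in> sets borel"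
proof -
  have "Measurable.pred borel (\<lambda>\<alpha>. \<forall>k::nat. \<exists>N0::nat. \<forall>N. N0 \<le> N \<longrightarrow> 2 \<le> N \<longrightarrow> Pk x k N \<alpha>)"
  proof -
    have inner: "Measurable.pred borel (\<lambda>\<alpha>::real. \<bar>\<alpha> * a - \<alpha> * b - j\<bar> < c)" for a b j c :: real
      by measurable
    have cst: "Measurable.pred borel (\<lambda>\<alpha>::real. P)" for P
      by (cases P) simp_all
    show ?thesis unfolding Pk_def
      by (intro pred_intros_countable pred_intros_logic(3,4) inner cst)
  qed
  then have P: "{\<alpha> \<in> space borel. \<forall>k::nat. \<exists>N0::nat. \<forall>N. N0 \<le> N \<longrightarrow> 2 \<le> N \<longrightarrow> Pk x k N \<alpha>} \<in> sets borel"
    unfolding pred_def .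
  have eq: "{\<alpha> \<in> space borel. \<forall>k::nat. \<exists>N0::nat. \<forall>N. N0 \<le> N \<longrightarrow> 2 \<le> N \<longrightarrow> Pk x k N \<alpha>} = {\<alpha>::real. small_gap x \<alpha>}"
    using sg_alt[of x] by auto
  show ?thesis using P by (simp only: eq[symmetric])
qed



lemma bl1: fixes E :: "real set" assumes Eb: "E \<in> sets borel"
  shows "E \<inter> {a..b} \<in> sets lebesgue"
proof -
  have "E \<inter> {a..b} \<in> sets borel" using Eb by (intro sets.Int) auto
  then show ?thesis by auto
qed

lemma bl2: fixes E :: "real set" assumes Eb: "E \<in> sets borel"
  shows "E \<inter> {a<..<b} \<in> sets lebesgue"
proof -
  have "E \<inter> {a<..<b} \<in> sets borel" using Eb by (intro sets.Int) auto
  then show ?thesis by auto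
qed

lemma per_null:
  fixes E :: "real set"
  assumes Eb: "E \<in> sets borel"
    and per: "\<And>\<alpha> k. \<alpha> + real_of_int k \<in> E \<longleftrightarrow> \<alpha> \<in> E"
    and z: "emeasure lebesgue (E \<inter> {0..1}) = 0"
  shows "E \<in> null_sets lebesgue"
proof -
  have img: "(\<lambda>x. 1 *\<^sub>R x + real_of_int m) ` (E \<inter> {0..1}) = E \<inter> {real_of_int m..real_of_int m + 1}" for m :: int
  proof (intro equalityI subsetI)
    fix y assume "y \<in> (\<lambda>x. 1 *\<^sub>R x + real_of_int m) ` (E \<inter> {0..1})"
    then obtain z where "z \<in> E" "z \<in> {0..1}" "y = z + real_of_int m" by auto
    then show "y \<in> E \<inter> {real_of_int m..real_of_int m + 1}" using per by auto
  next
    fix y assume y: "y \<in> E \<inter> {real_of_int m..real_of_int m + 1}"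
    have "y - real_of_int m \<in> E" using per[of "y - real_of_int m" m] y by simp
    then show "y \<in> (\<lambda>x. 1 *\<^sub>R x + real_of_int m) ` (E \<inter> {0..1})"
      using y by (intro image_eqI[of _ _ "y - real_of_int m"]) auto
  qed
  have N: "E \<inter> {real_of_int m..real_of_int m + 1} \<in> null_sets lebesgue" for m :: int
  proof (rule null_setsI)
    show "emeasure lebesgue (E \<inter> {real_of_int m..real_of_int m + 1}) = 0"
      using emeasure_lebesgue_affine[of 1 "real_of_int m" "E \<inter> {0..1}"] z
      by (simp only: img DIM_real power_one_right abs_one ennreal_1 mult_1 mult_zero_right)
    show "E \<inter> {real_of_int m..real_of_int m + 1} \<in> sets lebesgue"
      using bl1[OF Eb] .
  qed
  have "(\<Union>m\<in>UNIV. E \<inter> {real_of_int m..real_of_int m + 1}) \<in> null_sets lebesgue"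
    by (rule null_sets_UN') (use N in auto)
  moreover have "(\<Union>m\<in>UNIV. E \<inter> {real_of_int m..real_of_int m + 1}) = E"
  proof (intro equalityI subsetI)
    fix y assume y: "y \<in> E"
    have "y \<in> E \<inter> {real_of_int \<lfloor>y\<rfloor>..real_of_int \<lfloor>y\<rfloor> + 1}"
      using y of_int_floor_le[of y] real_of_int_floor_add_one_gt[of y] by simp
    then show "y \<in> (\<Union>m\<in>UNIV. E \<inter> {real_of_int m..real_of_int m + 1})"
      by (rule UN_I[rotated]) simp
  qed auto
  ultimately show ?thesis by simp
qed

lemma trans_eq:
  fixes E :: "real set"
  assumes per: "\<And>\<alpha> k. \<alpha> + real_of_int k \<in> E \<longleftrightarrow> \<alpha> \<in> E"
  shows "emeasure lebesgue (E \<inter> {real_of_int m..real_of_int m + 1}) = emeasure lebesgue (E \<inter> {0..1})"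
proof -
  have img: "(\<lambda>x. 1 *\<^sub>R x + real_of_int m) ` (E \<inter> {0..1}) = E \<inter> {real_of_int m..real_of_int m + 1}"
  proof (intro equalityI subsetI)
    fix y assume "y \<in> (\<lambda>x. 1 *\<^sub>R x + real_of_int m) ` (E \<inter> {0..1})"
    then obtain z where "z \<in> E" "z \<in> {0..1}" "y = z + real_of_int m" by auto
    then show "y \<in> E \<inter> {real_of_int m..real_of_int m + 1}" using per by auto
  next
    fix y assume y: "y \<in> E \<inter> {real_of_int m..real_of_int m + 1}"
    have "y - real_of_int m \<in> E" using per[of "y - real_of_int m" m] y by simp
    then show "y \<in> (\<lambda>x. 1 *\<^sub>R x + real_of_int m) ` (E \<inter> {0..1})"
      using y by (intro image_eqI[of _ _ "y - real_of_int m"]) auto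
  qed
  show ?thesis
    using emeasure_lebesgue_affine[of 1 "real_of_int m" "E \<inter> {0..1}"]
    by (simp only: img DIM_real power_one_right abs_one ennreal_1 mult_1)
qed

lemma scale_lb:
  fixes C :: "real set"
  assumes Cb: "C \<in> sets borel"
    and per: "\<And>\<alpha> k. \<alpha> + real_of_int k \<in> C \<longleftrightarrow> \<alpha> \<in> C"
    and mulC: "\<And>\<alpha> q. q > 0 \<Longrightarrow> real q * \<alpha> \<in> C \<Longrightarrow> \<alpha> \<in> C"
    and q: "q > 0"
  shows "emeasure lebesgue (C \<inter> {0..1}) \<le> ennreal (real q) * emeasure lebesgue (C \<inter> {u..u + 2 / real q})"
proof -
  define P where "P = {\<alpha> \<in> {u..u + 2 / real q}. real q * \<alpha> \<in> C}"
  have qpos: "real q > 0" using q by simp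
  have img: "(\<lambda>x. real q *\<^sub>R x + 0) ` P = C \<inter> {real q * u..real q * u + 2}"
  proof (intro equalityI subsetI)
    fix y assume "y \<in> (\<lambda>x. real q *\<^sub>R x + 0) ` P"
    then obtain z where z: "z \<in> {u..u + 2 / real q}" "real q * z \<in> C" "y = real q * z"
      unfolding P_def by auto
    have "real q * z \<le> real q * (u + 2 / real q)" using z qpos by (intro mult_left_mono) auto
    then have "real q * z \<le> real q * u + 2" using qpos by (simp add: algebra_simps)
    moreover have "real q * u \<le> real q * z" using z qpos by (intro mult_left_mono) auto
    ultimately show "y \<in> C \<inter> {real q * u..real q * u + 2}" using z by auto
  next
    fix y assume y: "y \<in> C \<inter> {real q * u..real q * u + 2}"
    have "y / real q \<in> {u..u + 2 / real q}"
      using y qpos by (auto simp: field_simps)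
    moreover have "real q * (y / real q) \<in> C" using y qpos by simp
    ultimately show "y \<in> (\<lambda>x. real q *\<^sub>R x + 0) ` P"
      unfolding P_def using qpos by (intro image_eqI[of _ _ "y / real q"]) auto
  qed
  define m where "m = \<lceil>real q * u\<rceil>"
  have sub: "C \<inter> {real_of_int m..real_of_int m + 1} \<subseteq> C \<inter> {real q * u..real q * u + 2}"
  proof -
    have "real q * u \<le> real_of_int m" "real_of_int m + 1 \<le> real q * u + 2" unfolding m_def by linarith+
    then show ?thesis by auto
  qed
  have PC: "P \<subseteq> C \<inter> {u..u + 2 / real q}"
    unfolding P_def using mulC[OF q] by auto
  have "emeasure lebesgue (C \<inter> {0..1}) = emeasure lebesgue (C \<inter> {real_of_int m..real_of_int m + 1})"
    using trans_eq[OF per] by simp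
  also have "\<dots> \<le> emeasure lebesgue (C \<inter> {real q * u..real q * u + 2})"
    by (rule emeasure_mono[OF sub bl1[OF Cb]])
  also have "\<dots> = ennreal (real q) * emeasure lebesgue P"
    using emeasure_lebesgue_affine[of "real q" 0 P]
    by (simp only: img DIM_real power_one_right abs_of_nat)
  also have "\<dots> \<le> ennreal (real q) * emeasure lebesgue (C \<inter> {u..u + 2 / real q})"
    by (intro mult_left_mono emeasure_mono[OF PC bl1[OF Cb]]) auto
  finally show ?thesis .
qed

lemma core:
  fixes A :: "real set"
  assumes Ab: "A \<in> sets borel"
    and perA: "\<And>\<alpha> k. \<alpha> + real_of_int k \<in> A \<longleftrightarrow> \<alpha> \<in> A"
    and mulA: "\<And>\<alpha> q. q > 0 \<Longrightarrow> \<alpha> \<in> A \<Longrightarrow> real q * \<alpha> \<in> A"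
  shows "A \<in> null_sets lebesgue \<or> (UNIV - A) \<in> null_sets lebesgue"
proof -
  define C where "C = UNIV - A"
  have Cb: "C \<in> sets borel" unfolding C_def by (metis Ab sets.compl_sets space_borel)
  have perC: "\<And>\<alpha> k. \<alpha> + real_of_int k \<in> C \<longleftrightarrow> \<alpha> \<in> C" unfolding C_def using perA by auto
  have mulC: "\<And>\<alpha> q. q > 0 \<Longrightarrow> real q * \<alpha> \<in> C \<Longrightarrow> \<alpha> \<in> C" unfolding C_def using mulA by auto
  show ?thesis
  proof (cases "emeasure lebesgue (C \<inter> {0..1}) = 0")
    case True
    then show ?thesis using per_null[OF Cb perC] unfolding C_def by auto
  next
    case False
    define c where "c = measure lebesgue (C \<inter> {0..1})"
    have lm: "X \<inter> {a..b} \<in> lmeasurable" if "X \<in> sets borel" for X :: "real set" and a b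
      by (rule bounded_set_imp_lmeasurable) (use that in auto)
    have ceq: "emeasure lebesgue (C \<inter> {0..1}) = ennreal c"
      unfolding c_def using lm[OF Cb] by (simp add: emeasure_eq_measure2)
    have cpos: "c > 0" using False ceq c_def by (metis ennreal_0 measure_nonneg order_le_less)
    have cle: "c \<le> 1"
    proof -
      have "c \<le> measure lebesgue {0..1::real}"
        unfolding c_def by (rule measure_mono_fmeasurable) (use lm[OF Cb] in auto)
      then show ?thesis by simp
    qed
    define \<beta> where "\<beta> = 1 - c / 2"
    have \<beta>: "0 \<le> \<beta>" "\<beta> \<le> 1" using cpos cle unfolding \<beta>_def by auto
    have box: "measure lebesgue (A \<inter> {u<..<v}) \<le> \<beta> * (v - u)" if uv: "v - u = 1 / 2 ^ n" for u v :: real and n :: nat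
    proof -
      define q :: nat where "q = 2 ^ Suc n"
      have qpos: "q > 0" unfolding q_def by simp
      have v: "u + 2 / real q = v" using uv unfolding q_def by simp
      have uvle: "u \<le> v" using uv by (smt (verit) divide_pos_pos zero_less_power)
      define mC where "mC = measure lebesgue (C \<inter> {u..v})"
      define mA where "mA = measure lebesgue (A \<inter> {u..v})"
      have "ennreal c \<le> ennreal (real q) * emeasure lebesgue (C \<inter> {u..v})"
        using scale_lb[OF Cb perC mulC qpos, where u=u] unfolding ceq v .
      also have "emeasure lebesgue (C \<inter> {u..v}) = ennreal mC"
        unfolding mC_def using lm[OF Cb] by (simp add: emeasure_eq_measure2)
      also have "ennreal (real q) * ennreal mC = ennreal (real q * mC)"
        by (rule ennreal_mult[symmetric]) (auto simp: mC_def)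
      finally have "ennreal c \<le> ennreal (real q * mC)" .
      then have c_le: "c \<le> real q * mC" using qpos by (simp add: ennreal_le_iff mC_def)
      have "measure lebesgue ((A \<inter> {u..v}) \<union> (C \<inter> {u..v})) = mA + measure lebesgue (C \<inter> {u..v} - A \<inter> {u..v})"
        unfolding mA_def by (rule measure_Un2[OF lm[OF Ab] lm[OF Cb]])
      moreover have "C \<inter> {u..v} - A \<inter> {u..v} = C \<inter> {u..v}" by (auto simp: C_def)
      moreover have "(A \<inter> {u..v}) \<union> (C \<inter> {u..v}) = {u..v}" unfolding C_def by auto
      moreover have "measure lebesgue {u..v} = v - u" using uvle by simp
      ultimately have sum: "mA + mC = v - u" by (simp add: mC_def)
      have "measure lebesgue (A \<inter> {u<..<v}) \<le> mA"
        unfolding mA_def by (rule measure_mono_fmeasurable[OF _ bl2[OF Ab] lm[OF Ab]]) auto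
      moreover have "mC \<ge> c * (v - u) / 2"
      proof -
        have h: "(v - u) / 2 = 1 / real q" using uv unfolding q_def by simp
        have "c * (v - u) / 2 = c * ((v - u) / 2)" by simp
        also have "\<dots> = c * (1 / real q)" by (simp only: h)
        also have "\<dots> = c / real q" by simp
        also have "\<dots> \<le> mC" using c_le qpos by (simp add: divide_simps mult.commute)
        finally show ?thesis .
      qed
      moreover have "\<beta> * (v - u) = (v - u) - c * (v - u) / 2" by (simp add: \<beta>_def algebra_simps)
      ultimately show ?thesis using sum by linarith
    qed
    define S where "S = A \<inter> {0..1}"
    define s where "s = measure lebesgue S"
    have Slm: "S \<in> lmeasurable" unfolding S_def by (rule lm[OF Ab])
    have s0: "s \<ge> 0" unfolding s_def by simp
    have key: "s \<le> \<beta> * (s + e)" if e: "e > 0" for e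
    proof -
      have Ssub: "S \<subseteq> cbox (0::real) 1" unfolding S_def by auto
      obtain D where D1: "countable D"
        and D2: "\<And>K. K \<in> D \<Longrightarrow> K \<subseteq> cbox 0 1 \<and> K \<noteq> {} \<and> (\<exists>c d. K = cbox c d)"
        and D3: "pairwise (\<lambda>A B. interior A \<inter> interior B = {}) D"
        and D4: "\<And>u v. cbox u v \<in> D \<Longrightarrow> \<exists>n. \<forall>i\<in>Basis. v \<bullet> i - u \<bullet> i = ((1::real) \<bullet> i - 0 \<bullet> i) / 2 ^ n"
        and D5: "\<And>K. \<lbrakk>K \<in> D; box (0::real) 1 \<noteq> {}\<rbrakk> \<Longrightarrow> interior K \<noteq> {}"
        and D6: "S \<subseteq> \<Union>D" and D7: "\<Union>D \<in> lmeasurable" and D8: "measure lebesgue (\<Union>D) \<le> measure lebesgue S + e"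
        by (rule measurable_outer_intervals_bounded[OF Slm Ssub e]) (rule that)
      have Kform: "\<exists>c d n. K = {c..d} \<and> c \<le> d \<and> d - c = 1 / 2 ^ n" if K: "K \<in> D" for K
      proof -
        obtain c d where cd: "K = cbox c d" using D2[OF K] by blast
        have K1: "K = {c..d}" using cd by simp
        have "{c..d} \<noteq> {}" using D2[OF K] cd by simp
        then have K2: "c \<le> d" by simp
        have cbD: "cbox c d \<in> D" using K cd by simp
        obtain n where "\<forall>i\<in>Basis. d \<bullet> i - c \<bullet> i = ((1::real) \<bullet> i - 0 \<bullet> i) / 2 ^ n"
          using D4[OF cbD] by blast
        then have "d - c = 1 / 2 ^ n" by simp
        then show ?thesis using K1 K2 by blast
      qed
      define X where "X K = A \<inter> interior K" for K
      have Xmeas: "X K \<in> sets lebesgue" for K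
      proof -
        have "X K \<in> sets borel" unfolding X_def by (intro sets.Int Ab borel_open open_interior)
        then show ?thesis by auto
      qed
      have Imeas: "interior K \<in> sets lebesgue" for K :: "real set"
      proof -
        have "interior K \<in> sets borel" by (intro borel_open open_interior)
        then show ?thesis by auto
      qed
      have disjX: "disjoint_family_on X D" and disjI: "disjoint_family_on interior D"
        using D3 unfolding disjoint_family_on_def pairwise_def X_def by auto
      have boundK: "emeasure lebesgue (X K) \<le> ennreal \<beta> * emeasure lebesgue (interior K)" if K: "K \<in> D" for K
      proof -
        obtain c d n where cd: "K = {c..d}" "c \<le> d" "d - c = 1 / 2 ^ n" using Kform[OF K] by blast
        have XK: "X K = A \<inter> {c<..<d}" unfolding X_def cd by simp
        have "A \<inter> {c<..<d} \<in> lmeasurable"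
          by (rule fmeasurableI2[OF lm[OF Ab, of c d] _ bl2[OF Ab]]) auto
        then have "emeasure lebesgue (X K) = ennreal (measure lebesgue (A \<inter> {c<..<d}))"
          unfolding XK by (simp add: emeasure_eq_measure2)
        also have "\<dots> \<le> ennreal (\<beta> * (d - c))" using box[OF cd(3)] by (rule ennreal_leI)
        also have "\<dots> = ennreal \<beta> * ennreal (d - c)" using \<beta> cd by (intro ennreal_mult) auto
        also have "ennreal (d - c) = emeasure lebesgue (interior K)"
          unfolding cd(1) using cd(2) by simp
        finally show ?thesis .
      qed
      define Ed where "Ed = (\<Union>K\<in>D. K - interior K)"
      have Ed_count: "countable Ed"
        unfolding Ed_def
      proof (intro countable_UN[OF D1])
        fix K assume K: "K \<in> D"
        obtain c d n where cd: "K = {c..d}" "c \<le> d" "d - c = 1 / 2 ^ n" using Kform[OF K] by blast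
        have "K - interior K \<subseteq> {c, d}" unfolding cd by auto
        then show "countable (K - interior K)" by (rule countable_subset) auto
      qed
      have Ed_null: "Ed \<in> null_sets lebesgue"
      proof -
        have "Ed \<in> sets borel" by (rule sets.countable[OF _ Ed_count]) auto
        moreover have "emeasure lborel Ed = 0" by (rule emeasure_lborel_countable[OF Ed_count])
        ultimately have "Ed \<in> null_sets lborel" by auto
        then show ?thesis by (rule null_sets_completionI)
      qed
      have UXmeas: "(\<Union>(X ` D)) \<in> sets lebesgue"
        using D1 Xmeas by (intro sets.countable_UN'') auto
      have cover: "S \<subseteq> (\<Union>(X ` D)) \<union> Ed"
      proof
        fix y assume y: "y \<in> S"
        then obtain K where K: "K \<in> D" "y \<in> K" using D6 by blast
        show "y \<in> (\<Union>(X ` D)) \<union> Ed"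
        proof (cases "y \<in> interior K")
          case True
          then have "y \<in> X K" using y unfolding X_def S_def by auto
          then show ?thesis using K by auto
        next
          case False
          then show ?thesis using K unfolding Ed_def by auto
        qed
      qed
      have "ennreal s = emeasure lebesgue S"
        unfolding s_def using Slm by (simp add: emeasure_eq_measure2)
      also have "\<dots> \<le> emeasure lebesgue ((\<Union>(X ` D)) \<union> Ed)"
        by (rule emeasure_mono[OF cover]) (use UXmeas Ed_null in auto)
      also have "\<dots> \<le> emeasure lebesgue (\<Union>(X ` D)) + emeasure lebesgue Ed"
        by (rule emeasure_subadditive[OF UXmeas]) (use Ed_null in auto)
      also have "emeasure lebesgue Ed = 0" using Ed_null by auto
      also have "emeasure lebesgue (\<Union>(X ` D)) = (\<integral>\<^sup>+K. emeasure lebesgue (X K) \<partial>count_space D)"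
        by (rule emeasure_UN_countable[OF Xmeas D1 disjX])
      also have "\<dots> \<le> (\<integral>\<^sup>+K. ennreal \<beta> * emeasure lebesgue (interior K) \<partial>count_space D)"
        by (rule nn_integral_mono) (use boundK in auto)
      also have "\<dots> = ennreal \<beta> * (\<integral>\<^sup>+K. emeasure lebesgue (interior K) \<partial>count_space D)"
        by (rule nn_integral_cmult) auto
      also have "(\<integral>\<^sup>+K. emeasure lebesgue (interior K) \<partial>count_space D) = emeasure lebesgue (\<Union>(interior ` D))"
        by (rule emeasure_UN_countable[OF Imeas D1 disjI, symmetric])
      also have "emeasure lebesgue (\<Union>(interior ` D)) \<le> emeasure lebesgue (\<Union>D)"
        by (rule emeasure_mono) (use D7 interior_subset in auto)
      also have "emeasure lebesgue (\<Union>D) = ennreal (measure lebesgue (\<Union>D))"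
        using D7 by (simp add: emeasure_eq_measure2)
      also have "\<dots> \<le> ennreal (s + e)" using D8 unfolding s_def by (rule ennreal_leI)
      finally have "ennreal s \<le> ennreal \<beta> * ennreal (s + e)" by (simp add: mult_left_mono)
      also have "\<dots> = ennreal (\<beta> * (s + e))" using \<beta> s0 e by (intro ennreal_mult[symmetric]) auto
      finally show ?thesis using \<beta> s0 e by (subst (asm) ennreal_le_iff) auto
    qed
    have "s \<le> \<beta> * s"
    proof (rule field_le_epsilon)
      fix e :: real assume e: "e > 0"
      have "s \<le> \<beta> * s + \<beta> * e" using key[OF e] by (simp add: algebra_simps)
      moreover have "\<beta> * e \<le> e" using \<beta> e by (simp add: mult_le_cancel_right1)
      ultimately show "s \<le> \<beta> * s + e" by linarith
    qed
    then have "(c / 2) * s \<le> 0" unfolding \<beta>_def by (simp add: algebra_simps)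
    then have "s = 0" using cpos s0 by (auto simp: mult_le_0_iff)
    then have "emeasure lebesgue S = 0"
      using emeasure_eq_measure2[OF Slm] unfolding s_def by (simp only: ennreal_0)
    then have "emeasure lebesgue (A \<inter> {0..1}) = 0" unfolding S_def .
    then show ?thesis using per_null[OF Ab perA] by blast
  qed
qed


theorem theorem8:
  fixes x :: "nat \<Rightarrow> int"
  defines "A \<equiv> {\<alpha>::real. small_gap x \<alpha>}"
  shows "A \<in> null_sets lebesgue \<or> (UNIV - A) \<in> null_sets lebesgue"
proof (rule core)
  show "A \<in> sets borel" unfolding A_def by (rule A_borel)
  show "\<And>\<alpha> k. \<alpha> + real_of_int k \<in> A \<longleftrightarrow> \<alpha> \<in> A" unfolding A_def using sg_shift by simp
  show "\<And>\<alpha> q. q > 0 \<Longrightarrow> \<alpha> \<in> A \<Longrightarrow> real q * \<alpha> \<in> A" unfolding A_def using sg_mult by simp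
qed

end
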